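(* Let $a\in(0,1)$, $b>0$, and $p_0=a/(2b+1)$. Define for $t\in(0,1)$ \[ Q_{p_0}(t)=\frac{(1-t)^{-p_0}F(a,b;2b+1;t)}{F(a,b+1;2b+1;t)}. \] If $a-b>1/2$ then $Q_{p_0}$ is strictly decreasing on $(0,1)$; if $a-b<1/2$ then $Q_{p_0}$ is strictly increasing on $(0,1)$; if $a-b=1/2$ then $Q_{p_0}\equiv1$. Consequently, for all $t\in(0,1)$, \[ F(a,b;2b+1;t)<(1-t)^{p_0}F(a,b+1;2b+1;t)\ \text{ if } a-b>1/2, \] and the reverse strict inequality holds for all $t\in(0,1)$ if $a-b<1/2$.
   Context: For real $a,b,c$ with $c\notin\{0,-1,-2,\dots\}$, $F(a,b;c;x)=\sum_{n\ge0}\frac{(a)_n(b)_n}{(c)_n}\frac{x^n}{n!}$ for $x\in(-1,1)$, where $(a)_0=1$ and $(a)_n=a(a+1)\cdots(a+n-1)$. *)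

theory Defs
  imports "HOL-Analysis.Analysis"
begin

definition hyp2f1 :: "real \<Rightarrow> real \<Rightarrow> real \<Rightarrow> real \<Rightarrow> real" where
  "hyp2f1 a b c x = (\<Sum>n. pochhammer a n * pochhammer b n / pochhammer c n * x ^ n / fact n)"

definition Qp0 :: "real \<Rightarrow> real \<Rightarrow> real \<Rightarrow> real" where
  "Qp0 a b t = (1 - t) powr (- (a / (2*b+1))) * hyp2f1 a b (2*b+1) t / hyp2f1 a (b+1) (2*b+1) t"

end

theory Submission
  imports Defs "HOL-Real_Asymp.Real_Asymp"
begin


definition hc :: "real \<Rightarrow> real \<Rightarrow> real \<Rightarrow> nat \<Rightarrow> real" where
  "hc A B C n = pochhammer A n * pochhammer B n / pochhammer C n / fact n"

definition FF where "FF A B C x = (\<Sum>n. hc A B C n * x ^ n)"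
definition F1 where "F1 A B C x = (\<Sum>n. diffs (hc A B C) n * x ^ n)"
definition F2 where "F2 A B C x = (\<Sum>n. diffs (diffs (hc A B C)) n * x ^ n)"

lemma hyp_eq: "hyp2f1 A B C x = FF A B C x"
  unfolding hyp2f1_def FF_def hc_def by (simp add: field_simps)

lemma hc0[simp]: "hc A B C 0 = 1" by (simp add: hc_def)

lemma hc_rec:
  assumes "C > 0"
  shows "hc A B C (Suc n) * ((C + n) * (n + 1)) = hc A B C n * ((A + n) * (B + n))"
proof -
  have "pochhammer C n \<noteq> 0" using assms by (simp add: pochhammer_eq_0_iff) 
  moreover have "C + n \<noteq> 0" using assms by simp
  ultimately show ?thesis unfolding hc_def pochhammer_Suc fact_Suc
    by (simp add: divide_simps)
qed

lemma hc_pos: assumes "A > 0" "B > 0" "C > 0" shows "hc A B C n > 0"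
  unfolding hc_def using assms by (simp add: pochhammer_pos)

lemma hc_summable:
  assumes "C > 0" "\<bar>x\<bar> < 1"
  shows "summable (\<lambda>n. hc A B C n * x ^ n)"
proof -
  define r where "r = (1 + \<bar>x\<bar>) / 2"
  have r1: "r < 1" "\<bar>x\<bar> < r" using assms by (auto simp: r_def)
  have lim: "(\<lambda>n. (A + real n) * (B + real n) / ((C + real n) * (real n + 1))) \<longlonglongrightarrow> 1"
    by real_asymp
  hence "(\<lambda>n. \<bar>(A + real n) * (B + real n) / ((C + real n) * (real n + 1))\<bar> * \<bar>x\<bar>) \<longlonglongrightarrow> \<bar>1\<bar> * \<bar>x\<bar>"
    by (intro tendsto_intros)
  hence "eventually (\<lambda>n. \<bar>(A + real n) * (B + real n) / ((C + real n) * (real n + 1))\<bar> * \<bar>x\<bar> < r) sequentially"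
    using r1 by (intro order_tendstoD) auto
  then obtain N where N: "\<And>n. n \<ge> N \<Longrightarrow> \<bar>(A + real n) * (B + real n) / ((C + real n) * (real n + 1))\<bar> * \<bar>x\<bar> < r"
    by (auto simp: eventually_sequentially)
  show ?thesis
  proof (rule summable_ratio_test[OF r1(1), of N])
    fix n assume "n \<ge> N"
    have pos: "(C + real n) * (real n + 1) > 0" using assms by simp
    have e: "hc A B C (Suc n) = hc A B C n * ((A + n) * (B + n)) / ((C + n) * (n + 1))"
      using hc_rec[OF assms(1), of A B n] pos by (simp add: field_simps)
    have "norm (hc A B C (Suc n) * x ^ Suc n) = (\<bar>(A + real n) * (B + real n) / ((C + real n) * (real n + 1))\<bar> * \<bar>x\<bar>) * norm (hc A B C n * x ^ n)"
      unfolding e by (simp add: abs_mult power_abs abs_divide ac_simps)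
    also have "\<dots> \<le> r * norm (hc A B C n * x ^ n)"
      using N[OF \<open>n \<ge> N\<close>] by (intro mult_right_mono) auto
    finally show "norm (hc A B C (Suc n) * x ^ Suc n) \<le> r * norm (hc A B C n * x ^ n)" .
  qed
qed

lemma d1_summable:
  assumes "C > 0" "\<bar>x\<bar> < 1"
  shows "summable (\<lambda>n. diffs (hc A B C) n * x ^ n)"
  by (rule termdiff_converges[where K=1]) (use assms hc_summable in auto)

lemma d2_summable:
  assumes "C > 0" "\<bar>x\<bar> < 1"
  shows "summable (\<lambda>n. diffs (diffs (hc A B C)) n * x ^ n)"
  by (rule termdiff_converges[where K=1]) (use assms d1_summable in auto)

lemma FF_deriv:
  assumes "C > 0" "\<bar>x\<bar> < 1"
  shows "(FF A B C has_real_derivative F1 A B C x) (at x)"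
  unfolding FF_def F1_def
  by (rule termdiffs_strong'[where K=1]) (use assms hc_summable in auto)

lemma F1_deriv:
  assumes "C > 0" "\<bar>x\<bar> < 1"
  shows "(F1 A B C has_real_derivative F2 A B C x) (at x)"
  unfolding F2_def F1_def
  by (rule termdiffs_strong'[where K=1]) (use assms d1_summable in auto)

lemma shift_sums:
  fixes g :: "nat \<Rightarrow> real" and x :: real
  assumes "summable (\<lambda>n. g n * x ^ n)"
  shows "(\<lambda>n. (if n = 0 then 0 else g (n - 1)) * x ^ n) sums (x * (\<Sum>n. g n * x ^ n))"
proof -
  have "(\<lambda>n. x * (g n * x ^ n)) sums (x * (\<Sum>n. g n * x ^ n))"
    using sums_mult[OF summable_sums[OF assms], of x] by simp
  hence "(\<lambda>n. (\<lambda>n. (if n = 0 then 0 else g (n - 1)) * x ^ n) (Suc n)) sums (x * (\<Sum>n. g n * x ^ n))"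
    by (simp add: algebra_simps)
  thus ?thesis by (subst (asm) sums_Suc_iff) simp
qed

definition sh :: "(nat \<Rightarrow> real) \<Rightarrow> nat \<Rightarrow> real" where
  "sh g n = (if n = 0 then 0 else g (n - 1))"

lemma sh_diffs: "sh (diffs g) n = of_nat n * g n"
  by (cases n) (auto simp: sh_def diffs_def)

lemma shift_sums': "summable (\<lambda>n. g n * x ^ n) \<Longrightarrow> (\<lambda>n. sh g n * x ^ n) sums (x * (\<Sum>n. g n * x ^ n))"
  unfolding sh_def by (rule shift_sums)

lemma d1_eq:
  assumes "C > 0"
  shows "diffs (hc A B C) n = hc A B C n * (A + n) * (B + n) / (C + n)"
proof -
  have "C + n > 0" using assms by simp
  thus ?thesis using hc_rec[OF assms, of A B n] unfolding diffs_def
    by (simp add: field_simps)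
qed

lemma ode:
  assumes "C > 0" "\<bar>x\<bar> < 1"
  shows "x * (1 - x) * F2 A B C x + (C - (A + B + 1) * x) * F1 A B C x - A * B * FF A B C x = 0"
proof -
  define f where "f = hc A B C"
  define d1 where "d1 = diffs f"
  define d2 where "d2 = diffs d1"
  have s1: "(\<lambda>n. d2 n * x ^ n) sums F2 A B C x"
    unfolding F2_def d2_def d1_def f_def using d2_summable[OF assms] by (rule summable_sums)
  have s2: "(\<lambda>n. sh d2 n * x ^ n) sums (x * F2 A B C x)"
    using shift_sums'[OF sums_summable[OF s1]] s1 by (simp add: sums_iff)
  have s3: "(\<lambda>n. sh (sh d2) n * x ^ n) sums (x * (x * F2 A B C x))"
    using shift_sums'[OF sums_summable[OF s2]] s2 by (simp add: sums_iff)
  have s4: "(\<lambda>n. d1 n * x ^ n) sums F1 A B C x"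
    unfolding F1_def d1_def f_def using d1_summable[OF assms] by (rule summable_sums)
  have s5: "(\<lambda>n. sh d1 n * x ^ n) sums (x * F1 A B C x)"
    using shift_sums'[OF sums_summable[OF s4]] s4 by (simp add: sums_iff)
  have s6: "(\<lambda>n. f n * x ^ n) sums FF A B C x"
    unfolding FF_def f_def using hc_summable[OF assms] by (rule summable_sums)
  have all: "(\<lambda>n. sh d2 n * x^n - sh (sh d2) n * x^n + C * (d1 n * x^n) - (A+B+1) * (sh d1 n * x^n) - A*B*(f n * x^n))
     sums (x * F2 A B C x - x * (x * F2 A B C x) + C * F1 A B C x - (A+B+1) * (x * F1 A B C x) - A*B*FF A B C x)"
    by (intro sums_diff sums_add sums_mult s2 s3 s4 s5 s6)
  have coef: "sh d2 n - sh (sh d2) n + C * d1 n - (A+B+1) * sh d1 n - A*B*f n = 0" for n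
  proof (cases n)
    case 0
    then show ?thesis using hc_rec[OF assms(1), of A B 0]
      by (simp add: sh_def d2_def d1_def f_def diffs_def algebra_simps)
  next
    case (Suc m)
    show ?thesis
    proof (cases m)
      case 0
      then show ?thesis using hc_rec[OF assms(1), of A B 1] hc_rec[OF assms(1), of A B 0] unfolding Suc
        by (simp add: sh_def d2_def d1_def f_def diffs_def algebra_simps)
    next
      case (Suc j)
      have R: "f (j+3) * ((C + real j + 2) * (real j + 3)) = f (j+2) * ((A + real j + 2) * (B + real j + 2))"
        using hc_rec[OF assms(1), of A B "j+2"] unfolding f_def by (simp add: algebra_simps numeral_eq_Suc)
      have "sh d2 n - sh (sh d2) n + C * d1 n - (A+B+1) * sh d1 n - A*B*f n
          = f (j+3) * ((C + real j + 2) * (real j + 3)) - f (j+2) * ((A + real j + 2) * (B + real j + 2))"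
        unfolding \<open>n = Suc m\<close> Suc by (simp add: sh_def d2_def d1_def f_def diffs_def algebra_simps numeral_eq_Suc)
      also have "\<dots> = 0" using R by simp
      finally show ?thesis .
    qed
  qed
  have "(\<lambda>n. sh d2 n * x^n - sh (sh d2) n * x^n + C * (d1 n * x^n) - (A+B+1) * (sh d1 n * x^n) - A*B*(f n * x^n)) = (\<lambda>n. 0)"
  proof
    fix n
    have "sh d2 n * x^n - sh (sh d2) n * x^n + C * (d1 n * x^n) - (A+B+1) * (sh d1 n * x^n) - A*B*(f n * x^n)
      = (sh d2 n - sh (sh d2) n + C * d1 n - (A+B+1) * sh d1 n - A*B*f n) * x^n" by (simp add: algebra_simps)
    thus "sh d2 n * x^n - sh (sh d2) n * x^n + C * (d1 n * x^n) - (A+B+1) * (sh d1 n * x^n) - A*B*(f n * x^n) = 0"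
      using coef[of n] by simp
  qed
  with all have "(\<lambda>n. 0::real) sums (x * F2 A B C x - x * (x * F2 A B C x) + C * F1 A B C x - (A+B+1) * (x * F1 A B C x) - A*B*FF A B C x)"
    by simp
  hence "x * F2 A B C x - x * (x * F2 A B C x) + C * F1 A B C x - (A+B+1) * (x * F1 A B C x) - A*B*FF A B C x = 0"
    using sums_unique2 sums_zero by blast
  thus ?thesis by (simp add: algebra_simps)
qed

lemma G_eq:
  assumes "C > 0" "B > 0" "\<bar>x\<bar> < 1"
  shows "FF A (B + 1) C x = FF A B C x + x * F1 A B C x / B"
proof -
  define f where "f = hc A B C"
  have s4: "(\<lambda>n. diffs f n * x ^ n) sums F1 A B C x"
    unfolding F1_def f_def using d1_summable[OF assms(1,3)] by (rule summable_sums)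
  have s5: "(\<lambda>n. sh (diffs f) n * x ^ n) sums (x * F1 A B C x)"
    using shift_sums'[OF sums_summable[OF s4]] s4 by (simp add: sums_iff)
  have s6: "(\<lambda>n. f n * x ^ n) sums FF A B C x"
    unfolding FF_def f_def using hc_summable[OF assms(1,3)] by (rule summable_sums)
  have all: "(\<lambda>n. f n * x ^ n + inverse B * (sh (diffs f) n * x ^ n)) sums (FF A B C x + inverse B * (x * F1 A B C x))"
    by (intro sums_add sums_mult s5 s6)
  have pb: "pochhammer (B+1) n * B = pochhammer B n * (B + n)" for n
    using pochhammer_rec[of B n] pochhammer_Suc[of B n] by (simp add: mult.commute)
  have "f n * x ^ n + inverse B * (sh (diffs f) n * x ^ n) = hc A (B+1) C n * x ^ n" for n
  proof -
    have pb': "pochhammer (B+1) n = pochhammer B n * (B+n) / B"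
      using pb[of n] assms(2) by (simp add: field_simps)
    have h: "hc A (B+1) C n = hc A B C n * (B + n) / B"
      unfolding hc_def pb' by (simp add: field_simps)
    show ?thesis unfolding sh_diffs f_def h using assms(2) by (simp add: field_simps)
  qed
  with all have "(\<lambda>n. hc A (B+1) C n * x ^ n) sums (FF A B C x + inverse B * (x * F1 A B C x))" by simp
  thus ?thesis unfolding FF_def[of A "B+1"] by (simp add: sums_iff field_simps)
qed

lemma FF_pos:
  assumes "A > 0" "B > 0" "C > 0" "0 \<le> x" "x < 1"
  shows "FF A B C x > 0"
  unfolding FF_def
proof (rule suminf_pos2[where i=0])
  show "summable (\<lambda>n. hc A B C n * x ^ n)" using assms hc_summable by auto
  show "0 \<le> hc A B C n * x ^ n" for n using assms hc_pos[OF assms(1-3), of n] by simp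
qed simp

lemma P_pos:
  assumes "A > 0" "B > 0" "C > A" "0 < x" "x < 1"
  shows "(1 - A * x / C) * F1 A B C x - A * B / C * FF A B C x > 0"
proof -
  have C: "C > 0" using assms by simp
  have ax: "\<bar>x\<bar> < 1" using assms by simp
  define f where "f = hc A B C"
  have s4: "(\<lambda>n. diffs f n * x ^ n) sums F1 A B C x"
    unfolding F1_def f_def using d1_summable[OF C ax] by (rule summable_sums)
  have s5: "(\<lambda>n. sh (diffs f) n * x ^ n) sums (x * F1 A B C x)"
    using shift_sums'[OF sums_summable[OF s4]] s4 by (simp add: sums_iff)
  have s6: "(\<lambda>n. f n * x ^ n) sums FF A B C x"
    unfolding FF_def f_def using hc_summable[OF C ax] by (rule summable_sums)
  have all: "(\<lambda>n. diffs f n * x ^ n - A / C * (sh (diffs f) n * x ^ n) - A * B / C * (f n * x ^ n))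
     sums (F1 A B C x - A / C * (x * F1 A B C x) - A * B / C * FF A B C x)"
    by (intro sums_diff sums_mult s4 s5 s6)
  have trm: "diffs f n * x ^ n - A / C * (sh (diffs f) n * x ^ n) - A * B / C * (f n * x ^ n)
     = f n * (B + n) * n * (C - A) / (C * (C + n)) * x ^ n" for n
  proof -
    have Cn: "C + n > 0" using C by simp
    have e1: "f n*(A+n)*(B+n)/(C+n) - A/C*(n*f n) - A*B/C*f n = f n*(B+n)*n*(C-A)/(C*(C+n))"
      using C Cn by (simp add: divide_simps) (simp add: algebra_simps)
    have "diffs f n * x ^ n - A / C * (sh (diffs f) n * x ^ n) - A * B / C * (f n * x ^ n)
       = (f n*(A+n)*(B+n)/(C+n) - A/C*(n*f n) - A*B/C*f n) * x ^ n"
      unfolding sh_diffs f_def d1_eq[OF C] by (simp add: algebra_simps)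
    then show ?thesis unfolding e1 .
  qed
  have "0 < (\<Sum>n. diffs f n * x ^ n - A / C * (sh (diffs f) n * x ^ n) - A * B / C * (f n * x ^ n))"
  proof (rule suminf_pos2[where i=1])
    show "summable (\<lambda>n. diffs f n * x ^ n - A / C * (sh (diffs f) n * x ^ n) - A * B / C * (f n * x ^ n))"
      using all by (rule sums_summable)
    show "0 \<le> diffs f n * x ^ n - A / C * (sh (diffs f) n * x ^ n) - A * B / C * (f n * x ^ n)" for n
      unfolding trm using assms hc_pos[OF assms(1,2) C, of n] unfolding f_def
      by (intro mult_nonneg_nonneg divide_nonneg_pos) auto
    show "0 < diffs f 1 * x ^ 1 - A / C * (sh (diffs f) 1 * x ^ 1) - A * B / C * (f 1 * x ^ 1)"
      unfolding trm using assms hc_pos[OF assms(1,2) C, of 1] unfolding f_def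
      by (intro mult_pos_pos divide_pos_pos) auto
  qed
  also have "\<dots> = F1 A B C x - A / C * (x * F1 A B C x) - A * B / C * FF A B C x"
    using all by (simp add: sums_iff)
  finally show ?thesis by (simp add: algebra_simps)
qed



lemma core:
  fixes a b x F u w p0 :: real
  assumes ap: "a = p0*(2*b+1)"
  defines "al \<equiv> b*(p0 - a)" and "be \<equiv> p0 - a - b"
    and "e \<equiv> p0 + a - b - 1"
  defines "S \<equiv> al*F^2 + (2*b + be*x)*F*u + x*(1-x)*u^2"
    and "S' \<equiv> 2*al*F*u + be*F*u + (2*b+be*x)*(u^2 + F*w) + (1-2*x)*u^2 + 2*x*(1-x)*u*w"
  shows "(2*b+1)*(1-x)*S - e*x*S + x*(1-x)*S' - b*(1-2*p0)*x*F*((1 - p0*x)*u - p0*b*F)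
     = ((2*b+be*x)*F + 2*x*(1-x)*u) * (x*(1-x)*w + (2*b+1 - (a+b+1)*x)*u - a*b*F)"
  unfolding al_def be_def e_def S_def S'_def ap
    by (simp add: algebra_simps power2_eq_square)
lemma qid:
  fixes a b x F u w p0 :: real
  assumes ap: "a = p0*(2*b+1)" and b: "b > 0"
  defines "al \<equiv> b*(p0 - a)" and "be \<equiv> p0 - a - b"
  defines "S \<equiv> al*F^2 + (2*b + be*x)*F*u + x*(1-x)*u^2"
  shows "b*(p0*F*(F + x*u/b) + (1-x)*(u*(F + x*u/b) - F*(u + (u + x*w)/b))) - S
     = - F * (x*(1-x)*w + (2*b+1 - (a+b+1)*x)*u - a*b*F)"
  unfolding al_def be_def S_def ap using b
    by (simp add: field_simps power2_eq_square)

definition SS :: "real \<Rightarrow> real \<Rightarrow> real \<Rightarrow> real" where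
  "SS a b x = b*(a/(2*b+1) - a) * (FF a b (2*b+1) x)^2
     + (2*b + (a/(2*b+1) - a - b)*x) * FF a b (2*b+1) x * F1 a b (2*b+1) x
     + x*(1-x) * (F1 a b (2*b+1) x)^2"

lemma SS_deriv:
  fixes a b x :: real
  assumes b: "b > 0" and ax: "\<bar>x\<bar> < 1"
  defines "F \<equiv> FF a b (2*b+1) x" and "u \<equiv> F1 a b (2*b+1) x" and "w \<equiv> F2 a b (2*b+1) x"
  defines "al \<equiv> b*(a/(2*b+1) - a)" and "be \<equiv> a/(2*b+1) - a - b"
  shows "(SS a b has_real_derivative
     (2*al*F*u + be*F*u + (2*b+be*x)*(u^2 + F*w) + (1-2*x)*u^2 + 2*x*(1-x)*u*w)) (at x)"
proof -
  define c where "c = 2*b+1"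
  have C: "c > 0" using b by (simp add: c_def)
  note dF = FF_deriv[OF C ax, of a b] and du = F1_deriv[OF C ax, of a b]
  have e: "SS a b = (\<lambda>x. al * (FF a b c x)^2
     + (2*b + be*x) * FF a b c x * F1 a b c x
     + x*(1-x) * (F1 a b c x)^2)" unfolding SS_def al_def be_def c_def by (simp add: fun_eq_iff)
  show ?thesis unfolding e F_def u_def w_def c_def[symmetric]
    by (auto intro!: derivative_eq_intros dF du simp: algebra_simps power2_eq_square)
qed

definition VV :: "real \<Rightarrow> real \<Rightarrow> real \<Rightarrow> real" where
  "VV a b x = x powr (2*b+1) * (1-x) powr (a/(2*b+1) + a - b - 1) * SS a b x"

definition PP :: "real \<Rightarrow> real \<Rightarrow> real \<Rightarrow> real" where
  "PP a b x = (1 - a/(2*b+1)*x) * F1 a b (2*b+1) x - a/(2*b+1)*b*FF a b (2*b+1) x"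

lemma VV_deriv:
  fixes a b x :: real
  assumes b: "b > 0" and x: "0 < x" "x < 1"
  shows "(VV a b has_real_derivative b*(1 - 2*(a/(2*b+1))) * x powr (2*b+1)
      * (1-x) powr (a/(2*b+1) + a - b - 1 - 1) * FF a b (2*b+1) x * PP a b x) (at x)"
proof -
  define c where "c = 2*b+1"
  define p0 where "p0 = a/(2*b+1)"
  define e where "e = a/(2*b+1) + a - b - 1"
  define F where "F = FF a b (2*b+1) x"
  define u where "u = F1 a b (2*b+1) x"
  define w where "w = F2 a b (2*b+1) x"
  define al where "al = b*(a/(2*b+1) - a)"
  define be where "be = a/(2*b+1) - a - b"
  define S' where "S' = 2*al*F*u + be*F*u + (2*b+be*x)*(u^2 + F*w) + (1-2*x)*u^2 + 2*x*(1-x)*u*w"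
  define X where "X = x powr c"
  define Y where "Y = (1-x) powr e"
  have C: "c > 0" using b by (simp add: c_def)
  have ax: "\<bar>x\<bar> < 1" using x by simp
  have ap: "a = p0 * (2*b+1)" using b by (simp add: p0_def)
  have d1: "((\<lambda>x. x powr c) has_real_derivative c * x powr (c-1)) (at x)"
    by (rule has_real_derivative_powr) (use x in simp)
  have d2: "((\<lambda>x. (1-x) powr e) has_real_derivative - e * ((1-x) powr e) / (1-x)) (at x)"
  proof -
    have dg: "((\<lambda>x. 1 - x) has_real_derivative -1) (at x)"
      by (auto intro!: derivative_eq_intros)
    show ?thesis
      by (rule DERIV_cong[OF DERIV_powr[OF dg _ DERIV_const]]) (use x in auto)
  qed
  have dS: "(SS a b has_real_derivative S') (at x)"
    unfolding S'_def F_def u_def w_def al_def be_def using SS_deriv[OF b ax] .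
  have eV: "VV a b = (\<lambda>x. (x powr c * (1-x) powr e) * SS a b x)"
    by (simp add: fun_eq_iff VV_def c_def e_def)
  have dV: "(VV a b has_real_derivative
      (c * x powr (c-1) * (1-x) powr e + (- e * ((1-x) powr e) / (1-x)) * x powr c) * SS a b x
       + S' * (x powr c * (1-x) powr e)) (at x)"
    unfolding eV by (rule DERIV_mult[OF DERIV_mult[OF d1 d2] dS])
  have h1: "x powr (c-1) = X / x" unfolding X_def using x by (simp add: powr_diff)
  have h2: "(1-x) powr (e - of_nat 1) = Y / (1-x)" unfolding Y_def using x by (simp add: powr_diff)
  have h2': "(1-x) powr (e - 1) = Y / (1-x)" using h2 by simp
  have SSx: "SS a b x = al*F^2 + (2*b + be*x)*F*u + x*(1-x)*u^2"
    unfolding SS_def al_def be_def F_def u_def by simp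
  have PPx: "PP a b x = (1 - p0*x)*u - p0*b*F"
    unfolding PP_def p0_def F_def u_def by simp
  have ode0: "x*(1-x)*w + (2*b+1 - (a+b+1)*x)*u - a*b*F = 0"
    using ode[OF _ ax, of "2*b+1" a b] b unfolding w_def u_def F_def by simp
  have cr: "(2*b+1)*(1-x)*SS a b x - e*x*SS a b x + x*(1-x)*S' = b*(1-2*p0)*x*F*PP a b x"
    using core[OF ap, of x F u w] ode0 unfolding SSx PPx S'_def al_def be_def e_def p0_def
    by simp
  have "(c * x powr (c-1) * (1-x) powr e + (- e * ((1-x) powr e) / (1-x)) * x powr c) * SS a b x
       + S' * (x powr c * (1-x) powr e)
     = X * Y / (x*(1-x)) * ((2*b+1)*(1-x)*SS a b x - e*x*SS a b x + x*(1-x)*S')"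
    unfolding h1 using x by (simp add: X_def Y_def c_def field_simps)
  also have "\<dots> = b*(1 - 2*(a/(2*b+1))) * x powr (2*b+1)
      * (1-x) powr (a/(2*b+1) + a - b - 1 - 1) * FF a b (2*b+1) x * PP a b x"
  proof -
    have h3: "(1-x) powr (p0 + a - b - 1 - 1) = Y/(1-x)" using h2' unfolding e_def p0_def by simp
    have h4: "x powr (2*b+1) = X" unfolding X_def c_def ..
    have h5: "FF a b (2*b+1) x = F" unfolding F_def ..
    have h6: "a/(2*b+1) = p0" unfolding p0_def ..
    show ?thesis unfolding cr h3 h4 h5 h6 using x by (simp add: field_simps)
  qed
  finally show ?thesis using dV by (intro DERIV_cong[OF dV]) simp
qed

lemma SS_sign:
  fixes a b x :: real
  assumes a: "0 < a" "a < 1" and b: "b > 0" and x: "0 < x" "x < 1"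
  defines "s \<equiv> 1 - 2*(a/(2*b+1))"
  shows "(s > 0 \<longrightarrow> SS a b x > 0) \<and> (s < 0 \<longrightarrow> SS a b x < 0) \<and> (s = 0 \<longrightarrow> SS a b x = 0)"
proof -
  define c where "c = 2*b+1"
  define e where "e = a/(2*b+1) + a - b - 1"
  have C: "c > 0" "c > a" using a b by (auto simp: c_def)
  define pos where "pos y = b * y powr (2*b+1) * (1-y) powr (a/(2*b+1) + a - b - 1 - 1) * FF a b (2*b+1) y * PP a b y" for y
  have pos: "pos y > 0" if "0 < y" "y < 1" for y
  proof -
    have "FF a b (2*b+1) y > 0" using FF_pos[OF a(1) b, of "2*b+1" y] that b by simp
    moreover have "PP a b y > 0"
      using P_pos[OF a(1) b, of "2*b+1" y] that a b unfolding PP_def by (simp add: algebra_simps)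
    ultimately show ?thesis unfolding pos_def using that b by simp
  qed
  have dV: "(VV a b has_real_derivative s * pos y) (at y)" if "0 < y" "y < 1" for y
    using VV_deriv[OF b that] unfolding s_def pos_def by (simp add: algebra_simps)
  have cSS: "continuous_on {0..x} (SS a b)"
  proof (rule continuous_at_imp_continuous_on, rule ballI)
    fix y assume "y \<in> {0..x}"
    hence "\<bar>y\<bar> < 1" using x by auto
    from SS_deriv[OF b this] show "isCont (SS a b) y" by (rule DERIV_isCont)
  qed
  have cV: "continuous_on {0..x} (VV a b)"
  proof -
    have "continuous_on {0..x} (\<lambda>y. y powr (2*b+1) * (1-y) powr (a/(2*b+1) + a - b - 1) * SS a b y)"
    proof (intro continuous_on_mult cSS)
      show "continuous_on {0..x} (\<lambda>y. y powr (2*b+1))"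
        by (rule continuous_on_powr') (use b in \<open>auto intro: continuous_intros\<close>)
      show "continuous_on {0..x} (\<lambda>y. (1-y) powr (a/(2*b+1) + a - b - 1))"
        by (rule continuous_on_powr) (use x in \<open>auto intro: continuous_intros\<close>)
    qed
    thus ?thesis unfolding VV_def[abs_def] .
  qed
  have V0: "VV a b 0 = 0" by (simp add: VV_def)
  have Vx: "VV a b x = x powr (2*b+1) * (1-x) powr (a/(2*b+1) + a - b - 1) * SS a b x" by (simp add: VV_def)
  have Xp: "x powr (2*b+1) * (1-x) powr (a/(2*b+1) + a - b - 1) > 0" using x by simp
  have sp: "s > 0 \<longrightarrow> SS a b x > 0"
  proof
    assume "s > 0"
    have "VV a b 0 < VV a b x"
      by (rule DERIV_pos_imp_increasing_open[OF x(1) _ cV]) (use dV pos \<open>s > 0\<close> x in \<open>force\<close>)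
    thus "SS a b x > 0" unfolding V0 Vx using Xp zero_less_mult_pos by blast
  qed
  have sn: "s < 0 \<longrightarrow> SS a b x < 0"
  proof
    assume "s < 0"
    have "VV a b 0 > VV a b x"
      by (rule DERIV_neg_imp_decreasing_open[OF x(1) _ cV])
         (use dV pos \<open>s < 0\<close> x in \<open>force intro: mult_neg_pos\<close>)
    thus "SS a b x < 0" unfolding V0 Vx using Xp by (simp add: mult_less_0_iff)
  qed
  have sz: "s = 0 \<longrightarrow> SS a b x = 0"
  proof
    assume "s = 0"
    have "VV a b x = VV a b 0"
      by (rule DERIV_isconst_end[OF x(1) cV]) (use dV \<open>s = 0\<close> x in force)
    thus "SS a b x = 0" unfolding V0 Vx using Xp x by simp
  qed
  show ?thesis using sp sn sz by blast
qed

lemma Q_eq: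
  fixes a b y :: real
  assumes b: "b > 0" and y: "\<bar>y\<bar> < 1"
  shows "Qp0 a b y = (1-y) powr (-(a/(2*b+1))) * FF a b (2*b+1) y
     / (FF a b (2*b+1) y + y * F1 a b (2*b+1) y / b)"
  unfolding Qp0_def hyp_eq using G_eq[of "2*b+1" b y a] b y by simp

lemma Q_deriv:
  fixes a b y :: real
  assumes a: "0 < a" and b: "b > 0" and y: "0 \<le> y" "y < 1"
  shows "(Qp0 a b has_real_derivative (1-y) powr (-(a/(2*b+1))) * SS a b y
     / ((1-y) * b * (FF a b (2*b+1) y + y * F1 a b (2*b+1) y / b)^2)) (at y)"
proof -
  define c where "c = 2*b+1"
  define p0 where "p0 = a/(2*b+1)"
  define F where "F = FF a b c y"
  define u where "u = F1 a b c y"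
  define w where "w = F2 a b c y"
  define G where "G = F + y * u / b"
  define Y where "Y = (1-y) powr (-p0)"
  have C: "c > 0" using b by (simp add: c_def)
  have ay: "\<bar>y\<bar> < 1" using y by simp
  have ap: "a = p0 * (2*b+1)" using b by (simp add: p0_def)
  note dF = FF_deriv[OF C ay, of a b] and du = F1_deriv[OF C ay, of a b]
  have Gpos: "G > 0"
    using FF_pos[OF a _ C y, of "b+1"] G_eq[OF C b ay, of a] b unfolding G_def F_def u_def by simp
  have dY: "((\<lambda>y. (1-y) powr (-p0)) has_real_derivative p0 * Y / (1-y)) (at y)"
  proof -
    have dg: "((\<lambda>x. 1 - x) has_real_derivative -1) (at y)"
      by (auto intro!: derivative_eq_intros)
    show ?thesis
      by (rule DERIV_cong[OF DERIV_powr[OF dg _ DERIV_const]]) (use y in \<open>auto simp: Y_def\<close>)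
  qed
  have dG: "((\<lambda>y. FF a b c y + y * F1 a b c y / b) has_real_derivative (u + (u + y*w)/b)) (at y)"
    using b by (auto intro!: derivative_eq_intros dF du simp: u_def w_def field_simps)
  have dQh: "((\<lambda>y. (1-y) powr (-p0) * FF a b c y / (FF a b c y + y * F1 a b c y / b)) has_real_derivative
      ((p0 * Y / (1-y) * F + u * Y) * G - Y * F * (u + (u + y*w)/b)) / (G * G)) (at y)"
    using DERIV_divide[OF DERIV_mult[OF dY dF] dG] Gpos unfolding F_def u_def G_def Y_def by simp
  have ode0: "y*(1-y)*w + (2*b+1 - (a+b+1)*y)*u - a*b*F = 0"
    using ode[OF C ay, of a b] unfolding w_def u_def F_def c_def by simp
  have SSy: "SS a b y = b*(p0 - a)*F^2 + (2*b + (p0 - a - b)*y)*F*u + y*(1-y)*u^2"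
    unfolding SS_def p0_def F_def u_def c_def by simp
  have q: "b*(p0*F*G + (1-y)*(u*G - F*(u + (u + y*w)/b))) = SS a b y"
    using qid[OF ap b, of F y u w] ode0 unfolding SSy G_def by simp
  have eqD: "((p0 * Y / (1-y) * F + u * Y) * G - Y * F * (u + (u + y*w)/b)) / (G * G)
     = (1-y) powr (-(a/(2*b+1))) * SS a b y
     / ((1-y) * b * (FF a b (2*b+1) y + y * F1 a b (2*b+1) y / b)^2)"
  proof -
    have e1: "(1-y) powr (-(a/(2*b+1))) = Y" unfolding Y_def p0_def ..
    have e2: "FF a b (2*b+1) y + y * F1 a b (2*b+1) y / b = G" unfolding G_def F_def u_def c_def ..
    show ?thesis unfolding e1 e2 q[symmetric] using y b Gpos by (simp add: field_simps power2_eq_square)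
  qed
  have ev: "eventually (\<lambda>z. (1-z) powr (-p0) * FF a b c z / (FF a b c z + z * F1 a b c z / b) = Qp0 a b z) (nhds y)"
  proof -
    have "eventually (\<lambda>z. z \<in> {-1<..<1}) (nhds y)"
      using y by (intro eventually_nhds_in_open) auto
    thus ?thesis
    proof eventually_elim
      case (elim z)
      hence "\<bar>z\<bar> < 1" by auto
      from Q_eq[OF b this, of a] show ?case unfolding c_def p0_def by simp
    qed
  qed
  have "(Qp0 a b has_real_derivative ((p0 * Y / (1-y) * F + u * Y) * G - Y * F * (u + (u + y*w)/b)) / (G * G)) (at y)"
    using dQh by (subst (asm) DERIV_cong_ev[OF refl ev refl])
  thus ?thesis unfolding eqD .
qed

lemma Q0: "b > 0 \<Longrightarrow> Qp0 a b 0 = 1"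
  unfolding Qp0_def hyp_eq FF_def by simp

theorem lemma3:
  fixes a b :: real
  assumes "0 < a" "a < 1" "0 < b"
  defines "p0 \<equiv> a / (2*b+1)"
  shows "(a - b > 1/2 \<longrightarrow> strict_antimono_on {0<..<1} (Qp0 a b))
    \<and> (a - b < 1/2 \<longrightarrow> strict_mono_on {0<..<1} (Qp0 a b))
    \<and> (a - b = 1/2 \<longrightarrow> (\<forall>t\<in>{0<..<1}. Qp0 a b t = 1))
    \<and> (a - b > 1/2 \<longrightarrow> (\<forall>t\<in>{0<..<1}.
          hyp2f1 a b (2*b+1) t < (1 - t) powr p0 * hyp2f1 a (b+1) (2*b+1) t))
    \<and> (a - b < 1/2 \<longrightarrow> (\<forall>t\<in>{0<..<1}.
          hyp2f1 a b (2*b+1) t > (1 - t) powr p0 * hyp2f1 a (b+1) (2*b+1) t))"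
proof -
  note a = assms(1,2) and b = assms(3)
  define c where "c = 2*b+1"
  have C: "c > 0" using b by (simp add: c_def)
  define G where "G y = FF a b (2*b+1) y + y * F1 a b (2*b+1) y / b" for y
  define DQ where "DQ y = (1-y) powr (-(a/(2*b+1))) * SS a b y / ((1-y) * b * (G y)^2)" for y
  have Gpos: "G y > 0" if "0 \<le> y" "y < 1" for y
  proof -
    have "\<bar>y\<bar> < 1" using that by simp
    from G_eq[OF C b this, of a] FF_pos[OF a(1) _ C that, of "b+1"] b show ?thesis
      unfolding G_def c_def by simp
  qed
  have dQ: "(Qp0 a b has_real_derivative DQ y) (at y)" if "0 \<le> y" "y < 1" for y
    using Q_deriv[OF a(1) b that] unfolding DQ_def G_def .
  define s where "s = 1 - 2*(a/(2*b+1))"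
  have s_iff1: "a - b > 1/2 \<longleftrightarrow> s < 0" using b unfolding s_def by (simp add: field_simps)
  have s_iff2: "a - b < 1/2 \<longleftrightarrow> s > 0" using b unfolding s_def by (simp add: field_simps)
  have s_iff3: "a - b = 1/2 \<longleftrightarrow> s = 0" using b unfolding s_def by (auto simp: field_simps)
  have DQsign: "(s > 0 \<longrightarrow> DQ y > 0) \<and> (s < 0 \<longrightarrow> DQ y < 0) \<and> (s = 0 \<longrightarrow> DQ y = 0)"
    if "0 < y" "y < 1" for y
  proof -
    define K where "K = (1-y) powr (-(a/(2*b+1))) / ((1-y) * b * (G y)^2)"
    have den: "K > 0"
      using that b Gpos[of y] unfolding K_def by simp
    have "DQ y = K * SS a b y"
      unfolding DQ_def K_def by simp
    with SS_sign[OF a b that] den show ?thesis unfolding s_def[symmetric]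
      by (auto simp: mult_pos_neg mult_pos_pos)
  qed
  have cont: "continuous_on {r..t} (Qp0 a b)" if "0 \<le> r" "t < 1" for r t
  proof (rule DERIV_atLeastAtMost_imp_continuous_on)
    fix x assume "r \<le> x" "x \<le> t"
    hence "0 \<le> x" "x < 1" using that by auto
    thus "\<exists>y. (Qp0 a b has_real_derivative y) (at x)" using dQ by blast
  qed
  have dec: "Qp0 a b t < Qp0 a b r" if "s < 0" "0 \<le> r" "r < t" "t < 1" for r t
  proof (rule DERIV_neg_imp_decreasing_open[OF that(3) _ cont[OF that(2,4)]])
    fix x assume x: "r < x" "x < t"
    hence x': "0 \<le> x" "0 < x" "x < 1" using that by auto
    show "\<exists>y. (Qp0 a b has_real_derivative y) (at x) \<and> y < 0"
      using dQ[OF x'(1,3)] DQsign[OF x'(2,3)] that(1) by blast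
  qed
  have inc: "Qp0 a b r < Qp0 a b t" if "s > 0" "0 \<le> r" "r < t" "t < 1" for r t
  proof (rule DERIV_pos_imp_increasing_open[OF that(3) _ cont[OF that(2,4)]])
    fix x assume x: "r < x" "x < t"
    hence x': "0 \<le> x" "0 < x" "x < 1" using that by auto
    show "\<exists>y. (Qp0 a b has_real_derivative y) (at x) \<and> y > 0"
      using dQ[OF x'(1,3)] DQsign[OF x'(2,3)] that(1) by blast
  qed
  have const: "Qp0 a b t = 1" if "s = 0" "0 < t" "t < 1" for t
  proof -
    have "Qp0 a b t = Qp0 a b 0"
    proof (rule DERIV_isconst_end[OF that(2) cont[of 0 t]])
      show "0 \<le> (0::real)" "t < 1" using that by auto
      fix x assume x: "0 < x" "x < t"
      hence x': "0 \<le> x" "0 < x" "x < 1" using that by auto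
      have "DQ x = 0" using DQsign[OF x'(2,3)] that(1) by blast
      thus "(Qp0 a b has_real_derivative 0) (at x)" using dQ[OF x'(1,3)] by simp
    qed
    thus ?thesis using Q0[OF b] by simp
  qed
  have Qform: "Qp0 a b t = hyp2f1 a b (2*b+1) t / ((1-t) powr p0 * hyp2f1 a (b+1) (2*b+1) t)" for t
    unfolding Qp0_def p0_def by (simp add: powr_minus divide_inverse)
  have Hpos: "hyp2f1 a (b+1) (2*b+1) t > 0" if "0 \<le> t" "t < 1" for t
    unfolding hyp_eq using FF_pos[OF a(1) _ _ that, of "b+1" "2*b+1"] b by simp
  have part1: "a - b > 1/2 \<longrightarrow> strict_antimono_on {0<..<1} (Qp0 a b)"
    unfolding monotone_on_def using dec s_iff1 by (auto simp del: greaterThanLessThan_iff) (simp_all add: greaterThanLessThan_iff)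
  have part2: "a - b < 1/2 \<longrightarrow> strict_mono_on {0<..<1} (Qp0 a b)"
    using inc s_iff2 unfolding monotone_on_def by auto
  have part3: "a - b = 1/2 \<longrightarrow> (\<forall>t\<in>{0<..<1}. Qp0 a b t = 1)"
    using const s_iff3 by auto
  have part4: "a - b > 1/2 \<longrightarrow> (\<forall>t\<in>{0<..<1}.
          hyp2f1 a b (2*b+1) t < (1 - t) powr p0 * hyp2f1 a (b+1) (2*b+1) t)"
  proof (intro impI ballI)
    fix t :: real assume h: "a - b > 1/2" and t: "t \<in> {0<..<1}"
    have "Qp0 a b t < Qp0 a b 0" using dec[of 0 t] h s_iff1 t by auto
    hence "hyp2f1 a b (2*b+1) t / ((1-t) powr p0 * hyp2f1 a (b+1) (2*b+1) t) < 1"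
      using Q0[OF b] Qform[of t] by simp
    moreover have "(1-t) powr p0 * hyp2f1 a (b+1) (2*b+1) t > 0" using Hpos[of t] t by simp
    ultimately show "hyp2f1 a b (2*b+1) t < (1 - t) powr p0 * hyp2f1 a (b+1) (2*b+1) t"
      by (simp add: divide_less_eq)
  qed
  have part5: "a - b < 1/2 \<longrightarrow> (\<forall>t\<in>{0<..<1}.
          hyp2f1 a b (2*b+1) t > (1 - t) powr p0 * hyp2f1 a (b+1) (2*b+1) t)"
  proof (intro impI ballI)
    fix t :: real assume h: "a - b < 1/2" and t: "t \<in> {0<..<1}"
    have "Qp0 a b 0 < Qp0 a b t" using inc[of 0 t] h s_iff2 t by auto
    hence "1 < hyp2f1 a b (2*b+1) t / ((1-t) powr p0 * hyp2f1 a (b+1) (2*b+1) t)"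
      using Q0[OF b] Qform[of t] by simp
    moreover have "(1-t) powr p0 * hyp2f1 a (b+1) (2*b+1) t > 0" using Hpos[of t] t by simp
    ultimately show "hyp2f1 a b (2*b+1) t > (1 - t) powr p0 * hyp2f1 a (b+1) (2*b+1) t"
      by (simp add: less_divide_eq)
  qed
  show ?thesis using part1 part2 part3 part4 part5 by blast
qed

end
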